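(* Let $\varepsilon,\delta>0$ and let $A\subseteq\mathbb{F}_2^n$ be nonempty. Let $m=\log_2|\mathrm{span}(A)|$ and $k=\lceil 2m/\varepsilon\rceil\cdot\lceil\log_2(1/\delta)\rceil$. If $v_1,\dots,v_k$ are independent uniformly random elements of $A$, then with probability at least $1-\delta$, $$|A\cap\mathrm{span}(\{v_1,\dots,v_k\})|\ge(1-\varepsilon)|A|.$$
   Context: $\mathrm{span}(S)$ denotes the $\mathbb{F}_2$-linear span of $S$. *)

theory Defs
  imports "HOL-Probability.Probability" "HOL-Library.Z2"
begin

end

theory Submission
  imports Defs
begin

lemma finite_bit: "finite (UNIV :: bit set)"
proof -
  have "(UNIV :: bit set) = {0, 1}" using bit_not_zero_iff by blast
  then show ?thesis by (metis finite.emptyI finite.insertI)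
qed

lemma finite_bitvec: "finite (S :: (bit^'n) set)"
proof -
  have f: "finite (UNIV :: ('n \<Rightarrow> bit) set)"
  proof -
    have "(UNIV :: ('n \<Rightarrow> bit) set) = PiE UNIV (\<lambda>_. UNIV)" by (auto simp: PiE_def extensional_def)
    also have "finite \<dots>" by (rule finite_PiE) (auto simp: finite_bit)
    finally show ?thesis .
  qed
  have "(UNIV :: (bit^'n) set) = vec_lambda ` UNIV" by (metis surj_def vec_lambda_eta)
  then have "finite (UNIV :: (bit^'n) set)" using f by (metis finite_imageI)
  then show ?thesis by (rule finite_subset[rotated]) simp
qed

lemma span_ins_card:
  fixes x :: "bit^'n"
  assumes "x \<notin> vec.span S"
  shows "card (vec.span (insert x S)) = 2 * card (vec.span S)"
proof -
  have eq: "vec.span (insert x S) = vec.span S \<union> (\<lambda>y. y + x) ` vec.span S"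
  proof (rule set_eqI, rule iffI)
    fix y assume "y \<in> vec.span (insert x S)"
    then obtain k where k: "y - k *s x \<in> vec.span S" by (auto simp: vec.span_insert)
    show "y \<in> vec.span S \<union> (\<lambda>y. y + x) ` vec.span S"
    proof (cases "k = 0")
      case True with k show ?thesis by simp
    next
      case False then have "k = 1" by simp
      with k show ?thesis by (auto intro!: image_eqI[of _ _ "y - x"])
    qed
  next
    fix y assume "y \<in> vec.span S \<union> (\<lambda>y. y + x) ` vec.span S"
    then show "y \<in> vec.span (insert x S)"
      by (auto simp: vec.span_insert intro: exI[of _ 0] exI[of _ 1])
  qed
  have disj: "vec.span S \<inter> (\<lambda>y. y + x) ` vec.span S = {}"
  proof (safe)
    fix y assume "y + x \<in> vec.span S" "y \<in> vec.span S"
    then have "(y + x) - y \<in> vec.span S" by (rule vec.span_diff)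
    with assms show "y + x \<in> {}" by simp
  qed
  have "card (vec.span (insert x S)) = card (vec.span S) + card ((\<lambda>y. y + x) ` vec.span S)"
    unfolding eq by (rule card_Un_disjoint) (use disj finite_bitvec in auto)
  also have "card ((\<lambda>y. y + x) ` vec.span S) = card (vec.span S)"
    by (rule card_image) (auto simp: inj_on_def)
  finally show ?thesis by simp
qed

lemma span_ins_mono: "vec.span S \<subseteq> vec.span T \<Longrightarrow> vec.span (insert x S) \<subseteq> vec.span (insert (x::bit^'n) T)"
  by (auto simp: vec.span_insert)

lemma span_ins_eq: "vec.span S = vec.span T \<Longrightarrow> vec.span (insert x S) = vec.span (insert (x::bit^'n) T)"
  by (simp add: vec.span_insert)

lemma card_span_pos: "card (vec.span (S :: (bit^'n) set)) > 0"
  using finite_bitvec vec.span_zero by (metis card_gt_0_iff empty_iff)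

definition badS :: "(bit^'n) set \<Rightarrow> real \<Rightarrow> (bit^'n) set \<Rightarrow> bool" where
  "badS A e S \<longleftrightarrow> real (card (A \<inter> vec.span S)) < (1 - e) * real (card A)"

definition bi :: "(bit^'n) set \<Rightarrow> real \<Rightarrow> (bit^'n) set \<Rightarrow> real" where
  "bi A e S = (if badS A e S then 1 else 0)"

primrec Q :: "(bit^'n) set \<Rightarrow> nat \<Rightarrow> ((bit^'n) set \<Rightarrow> real) \<Rightarrow> (bit^'n) set \<Rightarrow> real" where
  "Q A 0 f S = f S"
| "Q A (Suc j) f S = (\<Sum>x\<in>A. Q A j f (insert x S)) / real (card A)"

primrec EE :: "(bit^'n) set \<Rightarrow> real \<Rightarrow> nat \<Rightarrow> (bit^'n) set \<Rightarrow> real" where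
  "EE A e 0 S = 0"
| "EE A e (Suc j) S = bi A e S + (\<Sum>x\<in>A. EE A e j (insert x S)) / real (card A)"

lemma badS_mono: "vec.span S \<subseteq> vec.span T \<Longrightarrow> badS A e T \<Longrightarrow> badS A e S"
  unfolding badS_def
proof -
  assume "vec.span S \<subseteq> vec.span T" "real (card (A \<inter> vec.span T)) < (1 - e) * real (card A)"
  moreover have "card (A \<inter> vec.span S) \<le> card (A \<inter> vec.span T)"
    using \<open>vec.span S \<subseteq> vec.span T\<close> by (intro card_mono finite_bitvec) auto
  ultimately show "real (card (A \<inter> vec.span S)) < (1 - e) * real (card A)" by linarith
qed

lemma span_sub_ins: "vec.span S \<subseteq> vec.span (insert x S)"
  by (intro vec.span_mono) auto

lemma Q_good: "\<not> badS A e S \<Longrightarrow> Q A j (bi A e) S = 0"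
proof (induction j arbitrary: S)
  case 0 then show ?case by (simp add: bi_def)
next
  case (Suc j)
  have "\<And>x. \<not> badS A e (insert x S)" using Suc.prems badS_mono[OF span_sub_ins] by blast
  then show ?case using Suc.IH by simp
qed

lemma Q_anti: "vec.span S \<subseteq> vec.span T \<Longrightarrow> Q A j (bi A e) T \<le> Q A j (bi A e) S"
proof (induction j arbitrary: S T)
  case 0 then show ?case using badS_mono[OF 0] by (auto simp: bi_def)
next
  case (Suc j)
  have "(\<Sum>x\<in>A. Q A j (bi A e) (insert x T)) \<le> (\<Sum>x\<in>A. Q A j (bi A e) (insert x S))"
    by (intro sum_mono Suc.IH span_ins_mono Suc.prems)
  then show ?case by (simp add: divide_right_mono)
qed

lemma Q_bounds:
  assumes "A \<noteq> {}"
  shows "0 \<le> Q A j (bi A e) S \<and> Q A j (bi A e) S \<le> 1"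
proof (induction j arbitrary: S)
  case 0 then show ?case by (simp add: bi_def)
next
  case (Suc j)
  have cp: "real (card A) > 0" using assms finite_bitvec by (simp add: card_gt_0_iff)
  have "(\<Sum>x\<in>A. Q A j (bi A e) (insert x S)) \<le> (\<Sum>x\<in>A. 1)"
    by (intro sum_mono) (use Suc.IH in blast)
  then have "(\<Sum>x\<in>A. Q A j (bi A e) (insert x S)) \<le> real (card A)" by simp
  moreover have "(\<Sum>x\<in>A. Q A j (bi A e) (insert x S)) \<ge> 0"
    by (intro sum_nonneg) (use Suc.IH in blast)
  ultimately show ?case using cp by simp
qed

lemma Q_add: "Q A (a + b) f S = Q A a (Q A b f) S"
  by (induction a arbitrary: S) simp_all

lemma Q_mono: "(\<And>T. f T \<le> g T) \<Longrightarrow> Q A j f S \<le> Q A j g S"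
proof (induction j arbitrary: S)
  case 0 then show ?case by simp
next
  case (Suc j)
  have "(\<Sum>x\<in>A. Q A j f (insert x S)) \<le> (\<Sum>x\<in>A. Q A j g (insert x S))"
    by (intro sum_mono Suc.IH Suc.prems)
  then show ?case by (simp add: divide_right_mono)
qed

lemma Q_scale: "Q A j (\<lambda>T. c * f T) S = c * Q A j f S"
  by (induction j arbitrary: S) (simp_all add: sum_distrib_left)

lemma Q_blocks:
  assumes "A \<noteq> {}" "Q A s (bi A e) {} \<le> 1/2"
  shows "Q A (s * r) (bi A e) S \<le> (1/2) ^ r"
proof (induction r arbitrary: S)
  case 0 then show ?case by (simp add: bi_def)
next
  case (Suc r)
  have le: "Q A (s * r) (bi A e) T \<le> (1/2)^r * bi A e T" for T
  proof (cases "badS A e T")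
    case True
    then have "bi A e T = 1" by (simp add: bi_def)
    with Suc.IH[of T] show ?thesis by simp
  next
    case False then show ?thesis by (simp add: Q_good bi_def)
  qed
  have "Q A (s * Suc r) (bi A e) S = Q A s (Q A (s * r) (bi A e)) S"
    by (simp add: Q_add[symmetric])
  also have "\<dots> \<le> Q A s (\<lambda>T. (1/2)^r * bi A e T) S" by (rule Q_mono) (rule le)
  also have "\<dots> = (1/2)^r * Q A s (bi A e) S" by (rule Q_scale)
  also have "Q A s (bi A e) S \<le> Q A s (bi A e) {}"
    by (rule Q_anti) (auto simp: vec.span_empty vec.span_zero)
  then have "(1/2::real)^r * Q A s (bi A e) S \<le> (1/2)^r * (1/2)"
    using assms(2) by (intro mult_left_mono) auto
  finally show ?case by simp
qed

lemma EE_span: "vec.span S = vec.span T \<Longrightarrow> EE A e j S = EE A e j T"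
proof (induction j arbitrary: S T)
  case 0 then show ?case by simp
next
  case (Suc j)
  have "badS A e S = badS A e T" using Suc.prems by (simp add: badS_def)
  moreover have "\<And>x. EE A e j (insert x S) = EE A e j (insert x T)"
    by (intro Suc.IH span_ins_eq Suc.prems)
  ultimately show ?case by (simp add: bi_def)
qed

lemma EE_nonneg: "0 \<le> EE A e j S"
  by (induction j arbitrary: S) (auto simp: bi_def intro!: sum_nonneg divide_nonneg_nonneg add_nonneg_nonneg)

lemma EE_mono: "EE A e j S \<le> EE A e (Suc j) S"
proof (induction j arbitrary: S)
  case 0 then show ?case by (simp add: bi_def)
next
  case (Suc j)
  have "(\<Sum>x\<in>A. EE A e j (insert x S)) \<le> (\<Sum>x\<in>A. EE A e (Suc j) (insert x S))"
    by (intro sum_mono Suc.IH)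
  then have "(\<Sum>x\<in>A. EE A e j (insert x S)) / real (card A) \<le> (\<Sum>x\<in>A. EE A e (Suc j) (insert x S)) / real (card A)"
    by (simp add: divide_right_mono)
  then show ?case by simp
qed

lemma P_bound:
  assumes "A \<noteq> {}"
  shows "Q A j (bi A e) S * real j \<le> EE A e j S"
proof (induction j arbitrary: S)
  case 0 then show ?case by simp
next
  case (Suc j)
  show ?case
  proof (cases "badS A e S")
    case False then show ?thesis using Q_good EE_nonneg by (metis mult_zero_left)
  next
    case True
    have cp: "real (card A) > 0" using assms finite_bitvec by (simp add: card_gt_0_iff)
    have "Q A (Suc j) (bi A e) S * real (Suc j)
        = (\<Sum>x\<in>A. Q A j (bi A e) (insert x S) * real j + Q A j (bi A e) (insert x S)) / real (card A)"
      by (simp add: sum.distrib sum_distrib_left sum_distrib_right algebra_simps)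
    also have "\<dots> \<le> (\<Sum>x\<in>A. EE A e j (insert x S) + 1) / real (card A)"
      by (intro divide_right_mono sum_mono add_mono Suc.IH) (use Q_bounds[OF assms] in auto)
    also have "\<dots> = (\<Sum>x\<in>A. EE A e j (insert x S)) / real (card A) + 1"
      using cp by (simp add: sum.distrib add_divide_distrib)
    also have "\<dots> = EE A e (Suc j) S" using True by (simp add: bi_def)
    finally show ?thesis .
  qed
qed

lemma EE_bound:
  assumes "A \<noteq> {}" "e > 0" "S \<subseteq> A"
  shows "EE A e j S \<le> (log 2 (card (vec.span A)) - log 2 (card (vec.span S))) / e"
  using assms(3)
proof (induction j arbitrary: S)
  case 0
  have "card (vec.span S) \<le> card (vec.span A)"
    using 0 by (intro card_mono finite_bitvec vec.span_mono)
  then have "log 2 (card (vec.span S)) \<le> log 2 (card (vec.span A))"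
    using card_span_pos[of S] by simp
  then show ?case using assms(2) by simp
next
  case (Suc j)
  define L where "L = log 2 (card (vec.span A)) - log 2 (card (vec.span S))"
  have cp: "real (card A) > 0" using assms finite_bitvec by (simp add: card_gt_0_iff)
  have IHx: "EE A e j (insert x S) \<le> (log 2 (card (vec.span A)) - log 2 (card (vec.span (insert x S)))) / e"
    if "x \<in> A" for x using Suc.IH Suc.prems that by simp
  show ?case
  proof (cases "badS A e S")
    case False
    have "EE A e j (insert x S) \<le> L / e" if "x \<in> A" for x
    proof -
      have "card (vec.span S) \<le> card (vec.span (insert x S))"
        by (intro card_mono finite_bitvec span_sub_ins)
      then have "log 2 (card (vec.span S)) \<le> log 2 (card (vec.span (insert x S)))"
        using card_span_pos[of S] by simp
      then show ?thesis using IHx[OF that] assms(2) unfolding L_def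
        by (smt (verit, ccfv_SIG) divide_right_mono)
    qed
    then have "(\<Sum>x\<in>A. EE A e j (insert x S)) \<le> (\<Sum>x\<in>A. L / e)" by (intro sum_mono)
    then have "(\<Sum>x\<in>A. EE A e j (insert x S)) / real (card A) \<le> L / e"
      using cp by (simp add: divide_le_eq mult.commute)
    then show ?thesis using False unfolding L_def by (simp add: bi_def)
  next
    case True
    define A1 where "A1 = A \<inter> vec.span S"
    define A2 where "A2 = A - vec.span S"
    define a where "a = real (card A1)"
    define b where "b = real (card A2)"
    define N where "N = real (card A)"
    define X where "X = EE A e (Suc j) S"
    have ab: "a + b = N" unfolding a_def b_def N_def A1_def A2_def
      using card_Int_Diff[of A "vec.span S"] finite_bitvec[of A] by simp
    have alt: "a < (1 - e) * N" using True unfolding a_def N_def A1_def badS_def by simp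
    have Npos: "N > 0" using cp N_def by simp
    have bpos: "b > e * N" using ab alt by (simp add: algebra_simps)
    have s1: "(\<Sum>x\<in>A1. EE A e j (insert x S)) = a * EE A e j S"
    proof -
      have "(\<Sum>x\<in>A1. EE A e j (insert x S)) = (\<Sum>x\<in>A1. EE A e j S)"
        by (intro sum.cong refl EE_span) (auto simp: A1_def vec.span_redundant)
      then show ?thesis by (simp add: a_def)
    qed
    have s2: "(\<Sum>x\<in>A2. EE A e j (insert x S)) \<le> b * ((L - 1) / e)"
    proof -
      have "EE A e j (insert x S) \<le> (L - 1) / e" if "x \<in> A2" for x
      proof -
        have "card (vec.span (insert x S)) = 2 * card (vec.span S)"
          using that by (intro span_ins_card) (auto simp: A2_def)
        then have "log 2 (card (vec.span (insert x S))) = 1 + log 2 (card (vec.span S))"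
          using card_span_pos[of S] by (simp add: log_mult)
        then have "(log 2 (card (vec.span A)) - log 2 (card (vec.span (insert x S)))) / e = (L - 1) / e"
          unfolding L_def by (simp add: algebra_simps)
        moreover have "x \<in> A" using that unfolding A2_def by simp
        ultimately show ?thesis using IHx by metis
      qed
      then have "(\<Sum>x\<in>A2. EE A e j (insert x S)) \<le> (\<Sum>x\<in>A2. (L - 1) / e)" by (intro sum_mono)
      then show ?thesis by (simp add: b_def)
    qed
    have "(\<Sum>x\<in>A. EE A e j (insert x S)) = (\<Sum>x\<in>A1. EE A e j (insert x S)) + (\<Sum>x\<in>A2. EE A e j (insert x S))"
      unfolding A1_def A2_def by (rule sum.Int_Diff) (rule finite_bitvec)
    also have "\<dots> \<le> a * X + b * ((L - 1) / e)"
      using s1 s2 EE_mono[of A e j S] unfolding X_def a_def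
      by (smt (verit) mult_left_mono of_nat_0_le_iff)
    finally have sumle: "(\<Sum>x\<in>A. EE A e j (insert x S)) \<le> a * X + b * ((L - 1) / e)" .
    have "X = 1 + (\<Sum>x\<in>A. EE A e j (insert x S)) / N" using True unfolding X_def N_def by (simp add: bi_def)
    then have "X * N = N + (\<Sum>x\<in>A. EE A e j (insert x S))" using Npos by (simp add: field_simps)
    then have "X * N \<le> N + a * X + b * ((L - 1) / e)" using sumle by linarith
    moreover have "X * N = a * X + b * X" using ab[symmetric] by (simp add: algebra_simps)
    ultimately have "b * X \<le> N + b * ((L - 1) / e)" by linarith
    moreover have "N < b / e" using bpos assms(2) by (simp add: field_simps)
    moreover have "b * ((L - 1) / e) + b / e = b * (L / e)" by (simp add: diff_divide_distrib algebra_simps)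
    ultimately have "b * X < b * (L / e)" by linarith
    then have "X < L / e" using bpos Npos assms(2)
      by (smt (verit) mult_le_cancel_left mult_pos_pos)
    then show ?thesis unfolding X_def L_def by simp
  qed
qed

lemma prob_as_exp: "measure_pmf.prob M X = measure_pmf.expectation M (indicator X :: _ \<Rightarrow> real)"
  by simp

lemma link:
  fixes A :: "(bit^'n) set"
  assumes "A \<noteq> {}"
  shows "measure_pmf.prob (Pi_pmf {..<k} 0 (\<lambda>_. pmf_of_set A)) {v. badS A e (S \<union> v ` {..<k})}
         = Q A k (bi A e) S"
proof (induction k arbitrary: S)
  case 0
  then show ?case by (simp add: bi_def indicator_def)
next
  case (Suc k)
  let ?P = "Pi_pmf {..<k} 0 (\<lambda>_. pmf_of_set A)"
  let ?X = "{v. badS A e (S \<union> v ` {..<Suc k})}"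
  have fA: "finite A" by (rule finite_bitvec)
  have eqP: "Pi_pmf {..<Suc k} 0 (\<lambda>_. pmf_of_set A) = pmf_of_set A \<bind> (\<lambda>y. map_pmf (\<lambda>f. f(k := y)) ?P)"
    unfolding lessThan_Suc by (subst Pi_pmf_insert') (auto simp: map_pmf_def)
  have fin: "finite (set_pmf (map_pmf (\<lambda>f. f(k := y)) ?P))" for y
    using fA assms by (auto simp: set_Pi_pmf intro!: finite_imageI finite_PiE_dflt)
  have pre: "(\<lambda>f. f(k := y)) -` ?X = {v. badS A e (insert y S \<union> v ` {..<k})}" for y
  proof -
    have "(v(k := y)) ` {..<Suc k} = insert y (v ` {..<k})" for v :: "nat \<Rightarrow> bit^'n"
      unfolding lessThan_Suc by (auto simp: fun_upd_image)
    then show ?thesis by auto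
  qed
  have "measure_pmf.prob (Pi_pmf {..<Suc k} 0 (\<lambda>_. pmf_of_set A)) ?X
      = (\<Sum>y\<in>A. measure_pmf.expectation (map_pmf (\<lambda>f. f(k := y)) ?P) (indicator ?X)) / real (card A)"
    unfolding eqP prob_as_exp
    by (subst pmf_expectation_bind_pmf_of_set[OF assms fA fin])
       (simp add: sum_divide_distrib divide_inverse_commute sum_distrib_left)
  also have "\<dots> = (\<Sum>y\<in>A. measure_pmf.prob ?P {v. badS A e (insert y S \<union> v ` {..<k})}) / real (card A)"
    by (simp only: prob_as_exp[symmetric] measure_map_pmf pre)
  also have "\<dots> = Q A (Suc k) (bi A e) S" by (simp only: Suc.IH Q.simps)
  finally show ?case .
qed

theorem lemma5p5:
  fixes A :: "(bit ^ 'n) set" and \<epsilon> \<delta> :: real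
  assumes "\<epsilon> > 0" and "\<delta> > 0" and "A \<noteq> {}"
  defines "m \<equiv> log 2 (real (card (vec.span A)))"
  defines "k \<equiv> nat (\<lceil>2 * m / \<epsilon>\<rceil> * \<lceil>log 2 (1 / \<delta>)\<rceil>)"
  shows "measure_pmf.prob (Pi_pmf {..<k} 0 (\<lambda>_. pmf_of_set A))
           {v. real (card (A \<inter> vec.span (v ` {..<k}))) \<ge> (1 - \<epsilon>) * real (card A)}
         \<ge> 1 - \<delta>"
proof -
  let ?M = "Pi_pmf {..<k} 0 (\<lambda>_. pmf_of_set A)"
  let ?X = "{v. real (card (A \<inter> vec.span (v ` {..<k}))) \<ge> (1 - \<epsilon>) * real (card A)}"
  have nn: "0 \<le> measure_pmf.prob ?M ?X" by (rule measure_nonneg)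
  show ?thesis
  proof (cases "\<delta> \<ge> 1")
    case True then show ?thesis using nn by linarith
  next
    case False
    define s where "s = nat \<lceil>2 * m / \<epsilon>\<rceil>"
    define r where "r = nat \<lceil>log 2 (1 / \<delta>)\<rceil>"
    have spanA1: "card (vec.span A) \<ge> 1" using card_span_pos[of A] by simp
    have m0: "m \<ge> 0" unfolding m_def using spanA1 by simp
    have lpos: "log 2 (1 / \<delta>) > 0" using False assms(2) by simp
    have "0 \<le> 2 * m / \<epsilon>" using m0 assms(1) by simp
    then have c1: "0 \<le> \<lceil>2 * m / \<epsilon>\<rceil>" by linarith
    have kk: "k = s * r" unfolding k_def s_def r_def
      by (rule nat_mult_distrib[OF c1])
    have compl: "?X = UNIV - {v. badS A \<epsilon> ({} \<union> v ` {..<k})}"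
      by (auto simp: badS_def not_less)
    have pX: "measure_pmf.prob ?M ?X = 1 - Q A k (bi A \<epsilon>) {}"
      unfolding compl using link[OF assms(3), of k \<epsilon> "{}"]
      by (subst measure_pmf.prob_compl[unfolded space_measure_pmf]) auto
    have block: "Q A s (bi A \<epsilon>) {} \<le> 1/2"
    proof (cases "s = 0")
      case True
      then have "2 * m / \<epsilon> \<le> 0" unfolding s_def by simp
      then have "m \<le> 0" using assms(1) by (simp add: divide_le_0_iff)
      then have "m = 0" using m0 by simp
      then have hl: "log 2 (real (card (vec.span A))) = 0" unfolding m_def .
      have "real (card (vec.span A)) = 2 powr (log 2 (real (card (vec.span A))))"
        using spanA1 by simp
      then have "real (card (vec.span A)) = 1" using hl by simp
      then have "card (vec.span A) = 1" by simp
      then obtain z where z: "vec.span A = {z}" by (rule card_1_singletonE)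
      then have "vec.span A = {0}" using vec.span_zero[of A] by simp
      then have "A \<subseteq> vec.span {}" using vec.span_superset[of A] by (simp add: vec.span_empty)
      then have "A \<inter> vec.span {} = A" by blast
      then have "\<not> badS A \<epsilon> {}" unfolding badS_def using assms(1) by (simp add: algebra_simps not_less)
      then show ?thesis using True by (simp add: bi_def)
    next
      case False
      have "Q A s (bi A \<epsilon>) {} * real s \<le> EE A \<epsilon> s {}" by (rule P_bound[OF assms(3)])
      also have "\<dots> \<le> (log 2 (card (vec.span A)) - log 2 (card (vec.span ({}::(bit^'n) set)))) / \<epsilon>"
        by (rule EE_bound[OF assms(3) assms(1)]) simp
      also have "\<dots> = m / \<epsilon>" unfolding m_def by (simp add: vec.span_empty)
      also have "\<dots> \<le> real s / 2"
      proof -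
        have "2 * m / \<epsilon> \<le> real s" unfolding s_def by linarith
        then show ?thesis by (simp add: field_simps)
      qed
      finally have "Q A s (bi A \<epsilon>) {} * real s \<le> real s / 2" .
      then show ?thesis using False by (simp add: field_simps)
    qed
    have "Q A k (bi A \<epsilon>) {} \<le> (1/2) ^ r" unfolding kk by (rule Q_blocks[OF assms(3) block])
    also have "(1/2::real) ^ r \<le> \<delta>"
    proof -
      have "log 2 (1 / \<delta>) \<le> real r" unfolding r_def by linarith
      then have "2 powr log 2 (1 / \<delta>) \<le> 2 powr real r" by simp
      then have "1 / \<delta> \<le> 2 ^ r" using assms(2) by (simp add: powr_realpow)
      then show ?thesis using assms(2) by (simp add: field_simps power_divide)
    qed
    finally show ?thesis using pX by linarith
  qed
qed

end
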